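(* Let $\mathcal{M}=(E,\mathcal{I})$ be a matroid with $E=\{e_1,\dots,e_n\}$, let $E_0$ be its set of loops, and let $E_1,\dots,E_k$ and $r_1,\dots,r_k$ be the ground sets and ranks of the principal minors of $\mathcal{M}\setminus E_0$. Let $\mathcal{P}$ be the partition matroid on $E$ whose independent sets are the sets $\bigcup_{i=1}^k I_i$ with $I_i\subseteq E_i$ and $|I_i|\leq r_i$. Let $w_1\geq\dots\geq w_n\geq 0$ and let $\sigma$ be a uniformly random permutation of $[n]$ defining weights $w(e_{\sigma(i)})=w_i$. Then $$\mathbb{E}_\sigma[w(\mathrm{OPT}_{\mathcal{P}}(\sigma))]\geq(1-1/e)\,\mathbb{E}_\sigma[w(\mathrm{OPT}_{\mathcal{M}}(\sigma))].$$
   Context: Principal sequence: for a loopless matroid $\mathcal{N}$ on ground set $S$ with rank function $r$, there are unique sets $\emptyset=F_0\subsetneq F_1\subsetneq\dots\subsetneq F_k=S$ and values $\infty>\lambda_1>\dots>\lambda_k\geq 1$ such that $\lambda_1,\dots,\lambda_k$ are exactly the values $\lambda$ for which $f_\lambda(X)=\lambda r(X)-|X|$ ($X\subseteq S$) has more than one minimizer, and the unique minimal and maximal minimizers of $f_{\lambda_i}$ are $F_{i-1}$ and $F_i$. The principal minors are $\mathcal{M}_i=(\mathcal{N}/F_{i-1})|_{E_i}$ with ground set $E_i=F_i\setminus F_{i-1}$ and rank $r_i$. For a matroid $\mathcal{Q}$ on $E$, $\mathrm{OPT}_{\mathcal{Q}}(\sigma)$ is the set produced by the greedy procedure (select an element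 if the selected set stays independent in $\mathcal{Q}$) on the sequence $e_{\sigma(1)},e_{\sigma(2)},\dots,e_{\sigma(n)}$. For $S\subseteq E$, $w(S)=\sum_{e\in S}w(e)$. *)

theory Defs
  imports "HOL-Probability.Probability" "HOL-Combinatorics.Permutations"
begin

definition matroid :: "'a set \<Rightarrow> ('a set \<Rightarrow> bool) \<Rightarrow> bool" where
  "matroid E indep \<longleftrightarrow>
     finite E \<and> (\<forall>I. indep I \<longrightarrow> I \<subseteq> E) \<and> indep {} \<and>
     (\<forall>I J. indep J \<and> I \<subseteq> J \<longrightarrow> indep I) \<and>
     (\<forall>I J. indep I \<and> indep J \<and> card I < card J \<longrightarrow> (\<exists>x\<in>J - I. indep (insert x I)))"

definition mrank :: "('a set \<Rightarrow> bool) \<Rightarrow> 'a set \<Rightarrow> nat" where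
  "mrank indep X = Max (card ` {I. I \<subseteq> X \<and> indep I})"

definition loops :: "'a set \<Rightarrow> ('a set \<Rightarrow> bool) \<Rightarrow> 'a set" where
  "loops E indep = {x \<in> E. \<not> indep {x}}"

definition indep_del :: "('a set \<Rightarrow> bool) \<Rightarrow> 'a set \<Rightarrow> 'a set \<Rightarrow> bool" where
  "indep_del indep D = (\<lambda>I. indep I \<and> I \<inter> D = {})"

definition fval :: "('a set \<Rightarrow> bool) \<Rightarrow> real \<Rightarrow> 'a set \<Rightarrow> real" where
  "fval indep lam X = lam * real (mrank indep X) - real (card X)"

definition minimizers :: "'a set \<Rightarrow> ('a set \<Rightarrow> bool) \<Rightarrow> real \<Rightarrow> 'a set set" where
  "minimizers S indep lam =
     {X. X \<subseteq> S \<and> (\<forall>Y. Y \<subseteq> S \<longrightarrow> fval indep lam X \<le> fval indep lam Y)}"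

definition principal_seq ::
  "'a set \<Rightarrow> ('a set \<Rightarrow> bool) \<Rightarrow> nat \<Rightarrow> (nat \<Rightarrow> 'a set) \<Rightarrow> (nat \<Rightarrow> real) \<Rightarrow> bool" where
  "principal_seq S indep k F lam \<longleftrightarrow>
     F 0 = {} \<and> F k = S \<and> (\<forall>i<k. F i \<subset> F (Suc i)) \<and>
     (\<forall>i. 1 \<le> i \<and> i < k \<longrightarrow> lam (Suc i) < lam i) \<and>
     (1 \<le> k \<longrightarrow> 1 \<le> lam k) \<and>
     {l. \<exists>X Y. X \<in> minimizers S indep l \<and> Y \<in> minimizers S indep l \<and> X \<noteq> Y}
        = lam ` {1..k} \<and>
     (\<forall>i\<in>{1..k}. F (i - 1) \<in> minimizers S indep (lam i) \<and> F i \<in> minimizers S indep (lam i) \<and>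
        (\<forall>X\<in>minimizers S indep (lam i). F (i - 1) \<subseteq> X \<and> X \<subseteq> F i))"

text \<open>Principal minor i: (N / F(i-1)) restricted to E_i = F i - F (i-1).
  Its rank is the contraction rank r(E_i \<union> F(i-1)) - r(F(i-1)).\<close>
definition pm_ground :: "(nat \<Rightarrow> 'a set) \<Rightarrow> nat \<Rightarrow> 'a set" where
  "pm_ground F i = F i - F (i - 1)"

definition contr_rank :: "('a set \<Rightarrow> bool) \<Rightarrow> 'a set \<Rightarrow> 'a set \<Rightarrow> nat" where
  "contr_rank indep C X = mrank indep (X \<union> C) - mrank indep C"

definition pm_rank :: "('a set \<Rightarrow> bool) \<Rightarrow> (nat \<Rightarrow> 'a set) \<Rightarrow> nat \<Rightarrow> nat" where
  "pm_rank indep F i = contr_rank indep (F (i - 1)) (pm_ground F i)"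

definition partition_indep ::
  "'a set \<Rightarrow> nat \<Rightarrow> (nat \<Rightarrow> 'a set) \<Rightarrow> (nat \<Rightarrow> nat) \<Rightarrow> 'a set \<Rightarrow> bool" where
  "partition_indep E k Es rs I \<longleftrightarrow>
     I \<subseteq> E \<and> I \<subseteq> (\<Union>i\<in>{1..k}. Es i) \<and> (\<forall>i\<in>{1..k}. card (I \<inter> Es i) \<le> rs i)"

fun greedy :: "('a set \<Rightarrow> bool) \<Rightarrow> (nat \<Rightarrow> 'a) \<Rightarrow> nat \<Rightarrow> 'a set" where
  "greedy indep s 0 = {}"
| "greedy indep s (Suc m) =
     (let A = greedy indep s m in
      if indep (insert (s (Suc m)) A) then insert (s (Suc m)) A else A)"

definition setw :: "nat \<Rightarrow> (nat \<Rightarrow> real) \<Rightarrow> (nat \<Rightarrow> 'a) \<Rightarrow> (nat \<Rightarrow> nat) \<Rightarrow> 'a set \<Rightarrow> real" where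
  "setw n w e \<sigma> A = (\<Sum>i\<in>{1..n}. if e (\<sigma> i) \<in> A then w i else 0)"

end

theory Submission
  imports Defs "HOL-Analysis.Convex"
begin



lemma chebyshev_set:
  fixes f g :: "'b \<Rightarrow> real"
  assumes "finite A" and "\<And>x y. x \<in> A \<Longrightarrow> y \<in> A \<Longrightarrow> (f x - f y) * (g x - g y) \<ge> 0"
  shows "(\<Sum>x\<in>A. f x) * (\<Sum>x\<in>A. g x) \<le> real (card A) * (\<Sum>x\<in>A. f x * g x)"
proof -
  let ?S = "(\<Sum>x\<in>A. \<Sum>y\<in>A. (f x - f y) * (g x - g y))"
  have "2 * (real (card A) * (\<Sum>x\<in>A. f x * g x) - (\<Sum>x\<in>A. f x) * (\<Sum>x\<in>A. g x)) = ?S"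
    by (simp only: one_add_one[symmetric] algebra_simps)
      (simp add: algebra_simps sum_subtractf sum.distrib sum.swap[of "\<lambda>i j. f i * g j"] sum_distrib_left sum_distrib_right)
  moreover have "?S \<ge> 0" using assms by (intro sum_nonneg) auto
  ultimately have "0 \<le> 2 * (real (card A) * (\<Sum>x\<in>A. f x * g x) - (\<Sum>x\<in>A. f x) * (\<Sum>x\<in>A. g x))" by simp
  then show ?thesis by simp
qed

definition Pi_n :: "nat \<Rightarrow> (nat \<Rightarrow> nat) set" where
  "Pi_n n = {\<sigma>. \<sigma> permutes {1..n}}"

lemma Pi_n_finite: "finite (Pi_n n)"
  unfolding Pi_n_def by (rule finite_permutations) simp

lemma Pi_n_nonempty: "Pi_n n \<noteq> {}"
  unfolding Pi_n_def using permutes_id by blast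

lemma sum_perm_transpose:
  assumes "u \<in> {1..n}" "v \<in> {1..n}"
  shows "(\<Sum>\<sigma>\<in>Pi_n n. h (Transposition.transpose u v \<circ> \<sigma>)) = (\<Sum>\<sigma>\<in>Pi_n n. (h \<sigma> :: real))"
proof (rule sum.reindex_bij_betw)
  let ?t = "Transposition.transpose u v"
  show "bij_betw (\<lambda>\<sigma>. ?t \<circ> \<sigma>) (Pi_n n) (Pi_n n)"
  proof (rule bij_betw_byWitness[where f' = "\<lambda>\<sigma>. ?t \<circ> \<sigma>"])
    show "\<forall>a\<in>Pi_n n. ?t \<circ> (?t \<circ> a) = a" by (simp add: comp_assoc[symmetric])
    show "\<forall>a\<in>Pi_n n. ?t \<circ> (?t \<circ> a) = a" by (simp add: comp_assoc[symmetric])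
    show "(\<lambda>\<sigma>. ?t \<circ> \<sigma>) ` Pi_n n \<subseteq> Pi_n n"
      using assms by (auto simp: Pi_n_def intro!: permutes_compose permutes_swap_id)
    show "(\<lambda>\<sigma>. ?t \<circ> \<sigma>) ` Pi_n n \<subseteq> Pi_n n"
      using assms by (auto simp: Pi_n_def intro!: permutes_compose permutes_swap_id)
  qed
qed

lemma perm_image_card:
  assumes "\<sigma> \<in> Pi_n n" "m \<le> n"
  shows "\<sigma> ` {1..m} \<subseteq> {1..n}" "card (\<sigma> ` {1..m}) = m"
proof -
  have p: "\<sigma> permutes {1..n}" using assms by (simp add: Pi_n_def)
  show "\<sigma> ` {1..m} \<subseteq> {1..n}" using p assms(2) permutes_image[OF p] by auto
  have "inj_on \<sigma> {1..m}" using permutes_inj_on[OF p] .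
  then show "card (\<sigma> ` {1..m}) = m" by (simp add: card_image)
qed

lemma sym_ind:
  assumes "u \<in> {1..n}" "v \<in> {1..n}" "u \<notin> B" "v \<notin> B"
  shows "(\<Sum>\<sigma>\<in>Pi_n n. if u \<in> \<sigma> ` M \<and> Q (card (\<sigma> ` M \<inter> B)) then 1 else 0)
       = (\<Sum>\<sigma>\<in>Pi_n n. if v \<in> \<sigma> ` M \<and> Q (card (\<sigma> ` M \<inter> B)) then (1::real) else 0)"
proof -
  let ?t = "Transposition.transpose u v"
  have "\<And>\<sigma>. (u \<in> (?t \<circ> \<sigma>) ` M \<and> Q (card ((?t \<circ> \<sigma>) ` M \<inter> B))) = (v \<in> \<sigma> ` M \<and> Q (card (\<sigma> ` M \<inter> B)))"
  proof -
    fix \<sigma>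
    have 1: "(u \<in> (?t \<circ> \<sigma>) ` M) = (v \<in> \<sigma> ` M)"
      unfolding image_comp[symmetric] in_transpose_image_iff by simp
    have tB: "?t ` B = B" using assms(3,4) by simp
    have "(?t \<circ> \<sigma>) ` M \<inter> B = ?t ` (\<sigma> ` M) \<inter> ?t ` B"
      unfolding image_comp[symmetric] tB ..
    also have "\<dots> = ?t ` (\<sigma> ` M \<inter> B)" by (simp add: image_Int)
    finally have "(?t \<circ> \<sigma>) ` M \<inter> B = ?t ` (\<sigma> ` M \<inter> B)" .
    then have 2: "card ((?t \<circ> \<sigma>) ` M \<inter> B) = card (\<sigma> ` M \<inter> B)"
      by (simp add: card_image)
    show "?thesis \<sigma>" using 1 2 by simp
  qed
  note eq = this
  have "(\<Sum>\<sigma>\<in>Pi_n n. if v \<in> \<sigma> ` M \<and> Q (card (\<sigma> ` M \<inter> B)) then (1::real) else 0)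
     = (\<Sum>\<sigma>\<in>Pi_n n. (\<lambda>\<sigma>. if u \<in> \<sigma> ` M \<and> Q (card (\<sigma> ` M \<inter> B)) then (1::real) else 0) (?t \<circ> \<sigma>))"
    by (rule sum.cong[OF refl]) (simp only: eq)
  also have "\<dots> = (\<Sum>\<sigma>\<in>Pi_n n. if u \<in> \<sigma> ` M \<and> Q (card (\<sigma> ` M \<inter> B)) then 1 else 0)"
    by (rule sum_perm_transpose[OF assms(1,2)])
  finally show ?thesis by simp
qed


lemma sum_ind_card:
  assumes "finite A"
  shows "(\<Sum>v\<in>A. if v \<in> X then 1 else 0) = real (card (A \<inter> X))"
  using assms by (simp add: sum.If_cases Int_commute)

lemma mem_prob:
  assumes "u \<in> {1..n}" "m \<le> n"
  shows "(\<Sum>\<sigma>\<in>Pi_n n. if u \<in> \<sigma> ` {1..m} then 1 else 0) = real m * real (card (Pi_n n)) / real n"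
proof -
  define V where "V v = (\<Sum>\<sigma>\<in>Pi_n n. if v \<in> \<sigma> ` {1..m} then 1 else (0::real))" for v
  have symm: "V v = V u" if "v \<in> {1..n}" for v
    using sym_ind[OF that assms(1), of "{}" "{1..m}" "\<lambda>_. True"] by (simp add: V_def)
  have "(\<Sum>v\<in>{1..n}. V v) = (\<Sum>\<sigma>\<in>Pi_n n. \<Sum>v\<in>{1..n}. if v \<in> \<sigma> ` {1..m} then 1 else (0::real))"
    unfolding V_def by (rule sum.swap)
  also have "\<dots> = (\<Sum>\<sigma>\<in>Pi_n n. real m)"
  proof (rule sum.cong[OF refl])
    fix \<sigma> assume s: "\<sigma> \<in> Pi_n n"
    have "(\<Sum>v\<in>{1..n}. if v \<in> \<sigma> ` {1..m} then 1 else (0::real)) = real (card ({1..n} \<inter> \<sigma> ` {1..m}))"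
      by (rule sum_ind_card) simp
    also have "{1..n} \<inter> \<sigma> ` {1..m} = \<sigma> ` {1..m}" using perm_image_card[OF s assms(2)] by blast
    finally show "(\<Sum>v\<in>{1..n}. if v \<in> \<sigma> ` {1..m} then 1 else (0::real)) = real m"
      using perm_image_card[OF s assms(2)] by simp
  qed
  also have "\<dots> = real m * real (card (Pi_n n))" by simp
  finally have "(\<Sum>v\<in>{1..n}. V v) = real m * real (card (Pi_n n))" .
  moreover have "(\<Sum>v\<in>{1..n}. V v) = real n * V u" using symm by simp
  moreover have "n > 0" using assms(1) by simp
  ultimately show ?thesis unfolding V_def by (simp add: field_simps)
qed

lemma sumY:
  assumes "B \<subseteq> {1..n}" "m \<le> n"
  shows "(\<Sum>\<sigma>\<in>Pi_n n. real (card (\<sigma> ` {1..m} \<inter> B))) = real (card B) * real m * real (card (Pi_n n)) / real n"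
proof -
  have fB: "finite B" using assms(1) finite_subset by blast
  have "(\<Sum>\<sigma>\<in>Pi_n n. real (card (\<sigma> ` {1..m} \<inter> B))) = (\<Sum>\<sigma>\<in>Pi_n n. \<Sum>b\<in>B. if b \<in> \<sigma> ` {1..m} then 1 else 0)"
    using sum_ind_card[OF fB] by (simp add: Int_commute)
  also have "\<dots> = (\<Sum>b\<in>B. \<Sum>\<sigma>\<in>Pi_n n. if b \<in> \<sigma> ` {1..m} then 1 else 0)" by (rule sum.swap)
  also have "\<dots> = (\<Sum>b\<in>B. real m * real (card (Pi_n n)) / real n)"
    using mem_prob assms by (intro sum.cong) auto
  finally show ?thesis by simp
qed

lemma tail_bound:
  assumes "a \<in> {1..n}" "a \<notin> B" "B \<subseteq> {1..n}" "m \<le> n"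
  shows "(\<Sum>\<sigma>\<in>Pi_n n. if a \<in> \<sigma> ` {1..m} \<and> r \<le> card (\<sigma> ` {1..m} \<inter> B) then 1 else 0)
       \<le> real m / real n * (\<Sum>\<sigma>\<in>Pi_n n. if r \<le> card (\<sigma> ` {1..m} \<inter> B) then 1 else (0::real))"
proof -
  define C where "C = {1..n} - B"
  define Y where "Y \<sigma> = card (\<sigma> ` {1..m} \<inter> B)" for \<sigma>
  define Z where "Z = (\<Sum>\<sigma>\<in>Pi_n n. if a \<in> \<sigma> ` {1..m} \<and> r \<le> Y \<sigma> then 1 else (0::real))"
  define Q where "Q = (\<Sum>\<sigma>\<in>Pi_n n. if r \<le> Y \<sigma> then 1 else (0::real))"
  define P where "P = real (card (Pi_n n))"
  have fC: "finite C" by (simp add: C_def)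
  have aC: "a \<in> C" using assms by (simp add: C_def)
  have cardC: "real (card C) = real n - real (card B)"
  proof -
    have "card B \<le> card {1..n}" by (rule card_mono[OF _ assms(3)]) simp
    then have "card B \<le> n" by simp
    moreover have "card C = n - card B" unfolding C_def
      using card_Diff_subset[OF finite_subset[OF assms(3)] assms(3)] by simp
    ultimately show ?thesis by (simp add: of_nat_diff)
  qed
  have "card C > 0" using fC aC card_gt_0_iff by blast
  then have Cpos: "real (card C) > 0" by simp
  have n0: "real n > 0" using assms(1) by (cases n) auto
  have "card (Pi_n n) > 0" by (simp add: card_gt_0_iff Pi_n_finite Pi_n_nonempty)
  then have P0: "P > 0" unfolding P_def by simp
  have symm: "(\<Sum>\<sigma>\<in>Pi_n n. if c \<in> \<sigma> ` {1..m} \<and> r \<le> Y \<sigma> then 1 else (0::real)) = Z" if "c \<in> C" for c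
  proof -
    have c1: "c \<in> {1..n}" "c \<notin> B" using that by (auto simp: C_def)
    show ?thesis unfolding Z_def Y_def
      using sym_ind[OF c1(1) assms(1) c1(2) assms(2), of "{1..m}" "\<lambda>y. r \<le> y"] by simp
  qed
  have "real (card C) * Z = (\<Sum>c\<in>C. \<Sum>\<sigma>\<in>Pi_n n. if c \<in> \<sigma> ` {1..m} \<and> r \<le> Y \<sigma> then 1 else (0::real))"
    using symm by simp
  also have "\<dots> = (\<Sum>\<sigma>\<in>Pi_n n. \<Sum>c\<in>C. if c \<in> \<sigma> ` {1..m} \<and> r \<le> Y \<sigma> then 1 else (0::real))"
    by (rule sum.swap)
  also have "\<dots> = (\<Sum>\<sigma>\<in>Pi_n n. (if r \<le> Y \<sigma> then 1 else 0) * (real m - real (Y \<sigma>)))"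
  proof (rule sum.cong[OF refl])
    fix \<sigma> assume s: "\<sigma> \<in> Pi_n n"
    have T: "\<sigma> ` {1..m} \<subseteq> {1..n}" "card (\<sigma> ` {1..m}) = m" using perm_image_card[OF s assms(4)] by auto
    have "C \<inter> \<sigma> ` {1..m} = \<sigma> ` {1..m} - (\<sigma> ` {1..m} \<inter> B)" using T(1) by (auto simp: C_def)
    then have "card (C \<inter> \<sigma> ` {1..m}) = m - Y \<sigma>"
      using T by (simp add: card_Diff_subset Y_def)
    moreover have "Y \<sigma> \<le> m" unfolding Y_def using T by (metis Int_lower1 card_mono finite_imageI finite_atLeastAtMost)
    ultimately have "real (card (C \<inter> \<sigma> ` {1..m})) = real m - real (Y \<sigma>)" by simp
    then show "(\<Sum>c\<in>C. if c \<in> \<sigma> ` {1..m} \<and> r \<le> Y \<sigma> then 1 else (0::real)) = (if r \<le> Y \<sigma> then 1 else 0) * (real m - real (Y \<sigma>))"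
      using sum_ind_card[OF fC, of "\<sigma> ` {1..m}"] by auto
  qed
  also have "\<dots> = real m * Q - (\<Sum>\<sigma>\<in>Pi_n n. (if r \<le> Y \<sigma> then 1 else 0) * real (Y \<sigma>))"
  proof -
    have "(\<Sum>\<sigma>\<in>Pi_n n. (if r \<le> Y \<sigma> then 1 else 0) * (real m - real (Y \<sigma>)))
       = (\<Sum>\<sigma>\<in>Pi_n n. real m * (if r \<le> Y \<sigma> then 1 else 0) - (if r \<le> Y \<sigma> then 1 else 0) * real (Y \<sigma>))"
      by (rule sum.cong) (auto simp: algebra_simps)
    then show ?thesis by (simp only: sum_subtractf sum_distrib_left[symmetric] Q_def)
  qed
  finally have e1: "real (card C) * Z = real m * Q - (\<Sum>\<sigma>\<in>Pi_n n. (if r \<le> Y \<sigma> then 1 else 0) * real (Y \<sigma>))" .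
  have cheb: "Q * (\<Sum>\<sigma>\<in>Pi_n n. real (Y \<sigma>)) \<le> P * (\<Sum>\<sigma>\<in>Pi_n n. (if r \<le> Y \<sigma> then 1 else 0) * real (Y \<sigma>))"
    unfolding Q_def P_def by (rule chebyshev_set[OF Pi_n_finite]) auto
  have sY: "(\<Sum>\<sigma>\<in>Pi_n n. real (Y \<sigma>)) = real (card B) * real m * P / real n"
    unfolding Y_def P_def by (rule sumY[OF assms(3,4)])
  have "Q * real (card B) * real m / real n \<le> (\<Sum>\<sigma>\<in>Pi_n n. (if r \<le> Y \<sigma> then 1 else 0) * real (Y \<sigma>))"
  proof -
    have "P * (Q * real (card B) * real m / real n) \<le> P * (\<Sum>\<sigma>\<in>Pi_n n. (if r \<le> Y \<sigma> then 1 else 0) * real (Y \<sigma>))"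
      using cheb unfolding sY by (simp add: mult_ac)
    then show ?thesis using P0 by (rule mult_left_le_imp_le) 
  qed
  then have "real (card C) * Z \<le> real m * Q - Q * real (card B) * real m / real n" using e1 by linarith
  also have "\<dots> = real (card C) * (real m / real n * Q)" using n0 unfolding cardC by (simp add: field_simps)
  finally have "real (card C) * Z \<le> real (card C) * (real m / real n * Q)" .
  then have "Z \<le> real m / real n * Q" using Cpos by (rule mult_left_le_imp_le)
  then show ?thesis unfolding Z_def Q_def Y_def .
qed

lemma exp_ineq:
  fixes x :: real
  assumes "0 \<le> x"
  shows "(1 - exp (-1)) * min 1 x \<le> 1 - exp (- x)"
proof (cases "x \<le> 1")
  case True
  have "exp ((1 - x) *\<^sub>R 0 + x *\<^sub>R (-1)) \<le> (1 - x) * exp 0 + x * exp (-1)"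
    by (rule convex_onD[OF exp_convex]) (use True assms in auto)
  then show ?thesis using True by (simp add: algebra_simps)
next
  case False
  then show ?thesis by simp
qed

lemma final_bound:
  fixes r :: real and p :: real
  assumes "1 \<le> r" "0 \<le> p" "p \<le> 1"
  shows "(1 - exp (-1)) * min r (p * real K) \<le> r * (1 - (1 - p / r) ^ K)"
proof -
  have q0: "0 \<le> 1 - p / r" using assms by (simp add: field_simps)
  have "(1 - p / r) ^ K \<le> exp (- (p / r)) ^ K"
    using q0 exp_ge_add_one_self[of "- (p/r)"] by (intro power_mono) auto
  also have "\<dots> = exp (- (p * real K / r))" by (simp add: exp_of_nat_mult[symmetric] algebra_simps)
  finally have a: "(1 - p / r) ^ K \<le> exp (- (p * real K / r))" .
  have x0: "0 \<le> p * real K / r" using assms by simp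
  have "(1 - exp (-1)) * min r (p * real K) = r * ((1 - exp (-1)) * min 1 (p * real K / r))"
    using assms by (simp add: min_def field_simps)
  also have "\<dots> \<le> r * (1 - exp (- (p * real K / r)))"
    using exp_ineq[OF x0] assms by simp
  also have "\<dots> \<le> r * (1 - (1 - p / r) ^ K)" using a assms by simp
  finally show ?thesis .
qed


lemma minr_bound:
  assumes "B \<subseteq> {1..n}" "m \<le> n" "1 \<le> r"
  shows "real (card (Pi_n n)) * real r * (1 - (1 - (real m / real n) / real r) ^ card B)
     \<le> (\<Sum>\<sigma>\<in>Pi_n n. real (min r (card (\<sigma> ` {1..m} \<inter> B))))"
proof -
  have fB: "finite B" using assms(1) finite_subset by blast
  define P where "P = real (card (Pi_n n))"
  define p where "p = real m / real n"
  define q where "q = 1 - p / real r"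
  have p0: "0 \<le> p" and p1: "p \<le> 1" using assms(2) by (auto simp: p_def divide_le_eq_1)
  have q0: "0 \<le> q" using p1 assms(3) by (simp add: q_def field_simps)
  have rq: "real r * q + p = real r" using assms(3) by (simp add: q_def field_simps)
  have P0: "0 \<le> P" by (simp add: P_def)
  show ?thesis
    unfolding P_def[symmetric] p_def[symmetric] q_def[symmetric]
    using fB assms(1)
  proof (induction B rule: finite_subset_induct')
    case empty
    then show ?case by simp
  next
    case (insert a B)
    define Y where "Y \<sigma> = card (\<sigma> ` {1..m} \<inter> B)" for \<sigma>
    define S where "S = (\<Sum>\<sigma>\<in>Pi_n n. real (min r (Y \<sigma>)))"
    define Q where "Q = (\<Sum>\<sigma>\<in>Pi_n n. if r \<le> Y \<sigma> then 1 else (0::real))"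
    define A1 where "A1 = (\<Sum>\<sigma>\<in>Pi_n n. if a \<in> \<sigma> ` {1..m} then 1 else (0::real))"
    define A2 where "A2 = (\<Sum>\<sigma>\<in>Pi_n n. if a \<in> \<sigma> ` {1..m} \<and> r \<le> Y \<sigma> then 1 else (0::real))"
    have fBB: "finite B" using insert by simp
    have pt: "real (min r (card (\<sigma> ` {1..m} \<inter> insert a B))) =
       real (min r (Y \<sigma>)) + ((if a \<in> \<sigma> ` {1..m} then 1 else 0) - (if a \<in> \<sigma> ` {1..m} \<and> r \<le> Y \<sigma> then 1 else 0))" for \<sigma>
    proof (cases "a \<in> \<sigma> ` {1..m}")
      case True
      then have "\<sigma> ` {1..m} \<inter> insert a B = insert a (\<sigma> ` {1..m} \<inter> B)" by auto
      then have "card (\<sigma> ` {1..m} \<inter> insert a B) = Suc (Y \<sigma>)"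
        using insert(4) fBB by (simp add: Y_def)
      then show ?thesis using True by auto
    next
      case False
      then have "\<sigma> ` {1..m} \<inter> insert a B = \<sigma> ` {1..m} \<inter> B" by auto
      then show ?thesis using False by (simp add: Y_def)
    qed
    have S': "(\<Sum>\<sigma>\<in>Pi_n n. real (min r (card (\<sigma> ` {1..m} \<inter> insert a B)))) = S + (A1 - A2)"
      unfolding pt S_def A1_def A2_def by (simp add: sum.distrib sum_subtractf)
    have A1v: "A1 = p * P" unfolding A1_def p_def P_def using mem_prob[OF insert(2) assms(2)] by simp
    have A2v: "A2 \<le> p * Q" unfolding A2_def Q_def p_def Y_def
      by (rule tail_bound[OF insert(2) insert(4) insert(3) assms(2)])
    have QS: "real r * Q \<le> S" unfolding Q_def S_def sum_distrib_left
      by (rule sum_mono) auto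
    have IH: "P * real r * (1 - q ^ card B) \<le> S" using insert(5) by (simp add: S_def Y_def)
    have "p * (real r * Q) \<le> p * S" using QS p0 by (rule mult_left_mono)
    then have "p * Q \<le> p * S / real r" using assms(3) by (simp add: field_simps mult_ac)
    then have "S + (A1 - A2) \<ge> q * S + p * P" using A1v A2v by (simp add: q_def algebra_simps)
    moreover have "q * S \<ge> q * (P * real r * (1 - q ^ card B))" using IH q0 by (rule mult_left_mono)
    moreover have "q * (P * real r * (1 - q ^ card B)) + p * P = P * real r * (1 - q ^ card (insert a B))"
    proof -
      have "card (insert a B) = Suc (card B)" using insert fBB by simp
      then have "q ^ card (insert a B) = q * q ^ card B" by simp
      then show ?thesis using rq by (simp add: algebra_simps) (metis distrib_left mult.commute)
    qed
    ultimately show ?case using S' by linarith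
  qed
qed




lemma img_Suc: "s ` {1..Suc m} = insert (s (Suc m)) (s ` {1..m})"
proof -
  have "{1..Suc m} = insert (Suc m) {1..m}" by auto
  then show ?thesis by simp
qed

context
  fixes E :: "'a set" and indep :: "'a set \<Rightarrow> bool"
  assumes M: "matroid E indep"
begin

lemma m_sub: "indep I \<Longrightarrow> I \<subseteq> E" using M by (simp add: matroid_def)
lemma m_fin: "indep I \<Longrightarrow> finite I"
proof -
  assume "indep I"
  moreover have "finite E" using M by (simp add: matroid_def)
  ultimately show ?thesis using m_sub finite_subset by blast
qed
lemma m_empty: "indep {}" using M by (simp add: matroid_def)
lemma m_down: "indep J \<Longrightarrow> I \<subseteq> J \<Longrightarrow> indep I" using M unfolding matroid_def by blast
lemma m_aug: "indep I \<Longrightarrow> indep J \<Longrightarrow> card I < card J \<Longrightarrow> \<exists>x\<in>J - I. indep (insert x I)"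
  using M unfolding matroid_def by blast

lemma rk_fin: "finite {I. I \<subseteq> X \<and> indep I}"
proof -
  have "{I. I \<subseteq> X \<and> indep I} \<subseteq> Pow E" using m_sub by auto
  moreover have "finite E" using M by (simp add: matroid_def)
  ultimately show ?thesis using finite_subset by blast
qed

lemma rk_ge: "I \<subseteq> X \<Longrightarrow> indep I \<Longrightarrow> card I \<le> mrank indep X"
  unfolding mrank_def using rk_fin by (intro Max_ge) auto

lemma rk_ex: "\<exists>I. I \<subseteq> X \<and> indep I \<and> card I = mrank indep X"
proof -
  have "{I. I \<subseteq> X \<and> indep I} \<noteq> {}" using m_empty by auto
  then have "mrank indep X \<in> card ` {I. I \<subseteq> X \<and> indep I}"
    unfolding mrank_def using rk_fin by (intro Max_in) auto
  then show ?thesis by auto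
qed

lemma rk_empty: "mrank indep {} = 0"
  using rk_ex[of "{}"] by auto

lemma rk_mono: "X \<subseteq> Y \<Longrightarrow> mrank indep X \<le> mrank indep Y"
proof -
  assume XY: "X \<subseteq> Y"
  obtain I where I: "I \<subseteq> X" "indep I" "card I = mrank indep X" using rk_ex by blast
  have "card I \<le> mrank indep Y" using I XY by (intro rk_ge) auto
  then show ?thesis using I by simp
qed

lemma rk_diff:
  assumes "finite X"
  shows "mrank indep X \<le> mrank indep Y + card (X - Y)"
proof -
  obtain I where I: "I \<subseteq> X" "indep I" "card I = mrank indep X" using rk_ex by blast
  have fI: "finite I" using I m_fin by blast
  have "card I = card (I \<inter> Y) + card (I - Y)"
    using fI by (metis card_Int_Diff)
  also have "card (I \<inter> Y) \<le> mrank indep Y" using I by (intro rk_ge) (auto intro: m_down)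
  also have "card (I - Y) \<le> card (X - Y)" using I assms by (intro card_mono) auto
  finally show ?thesis using I by simp
qed

lemma loops_disj: "indep I \<Longrightarrow> I \<inter> loops E indep = {}"
proof -
  assume I: "indep I"
  { fix x assume x: "x \<in> I" "x \<in> loops E indep"
    have "indep {x}" using m_down[OF I] x(1) by simp
    then have False using x(2) by (simp add: loops_def) }
  then show ?thesis by blast
qed

lemma indep_del_id: "indep_del indep (loops E indep) = indep"
  unfolding indep_del_def using loops_disj by (auto simp: fun_eq_iff)

lemma rk_loops: "mrank indep (X - loops E indep) = mrank indep X"
proof -
  have "{I. I \<subseteq> X - loops E indep \<and> indep I} = {I. I \<subseteq> X \<and> indep I}"
    using loops_disj by blast
  then show ?thesis by (simp add: mrank_def)
qed

lemma greedy_matroid: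
  "greedy indep s m \<subseteq> s ` {1..m} \<and> indep (greedy indep s m) \<and> card (greedy indep s m) = mrank indep (s ` {1..m})"
proof (induction m)
  case 0
  then show ?case using m_empty rk_empty by simp
next
  case (Suc m)
  define G where "G = greedy indep s m"
  define T where "T = s ` {1..m}"
  define x where "x = s (Suc m)"
  define G' where "G' = (if indep (insert x G) then insert x G else G)"
  have G'eq: "greedy indep s (Suc m) = G'" by (simp add: G'_def G_def x_def Let_def)
  have T': "s ` {1..Suc m} = insert x T" unfolding T_def x_def by (rule img_Suc)
  have IH: "G \<subseteq> T" "indep G" "card G = mrank indep T" using Suc by (auto simp: G_def T_def)
  have sub: "G' \<subseteq> insert x T" "indep G'" using IH by (auto simp: G'_def)
  have fG: "finite G" using IH m_fin by blast
  have le: "card G' \<le> mrank indep (insert x T)" using sub rk_ge by blast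
  have ge: "mrank indep (insert x T) \<le> card G'"
  proof (rule ccontr)
    assume nle: "\<not> mrank indep (insert x T) \<le> card G'"
    obtain J where J: "J \<subseteq> insert x T" "indep J" "card J = mrank indep (insert x T)" using rk_ex by blast
    then have "card G' < card J" using nle by simp
    then obtain y where y: "y \<in> J - G'" "indep (insert y G')" using m_aug[OF sub(2) J(2)] by blast
    have yG: "y \<notin> G" "indep (insert y G)" using y by (auto simp: G'_def split: if_splits intro: m_down)
    have "y \<noteq> x \<or> \<not> indep (insert x G) \<Longrightarrow> y \<in> T" using y J by (auto simp: G'_def split: if_splits)
    moreover have "y \<noteq> x \<or> \<not> indep (insert x G)" using y by (auto simp: G'_def split: if_splits)
    ultimately have "y \<in> T" by blast
    then have "card (insert y G) \<le> mrank indep T" using IH yG by (intro rk_ge) auto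
    then show False using IH yG fG by simp
  qed
  show ?case using le ge sub G'eq T' by simp
qed

end





section \<open>Partition greedy\<close>

lemma greedy_part:
  assumes disj: "\<forall>i\<in>{1..k}. \<forall>j\<in>{1..k}. i \<noteq> j \<longrightarrow> Es i \<inter> Es j = {}"
  shows "inj_on s {1..m} \<Longrightarrow> s ` {1..m} \<subseteq> E \<Longrightarrow>
    greedy (partition_indep E k Es rs) s m \<subseteq> s ` {1..m} \<inter> (\<Union>i\<in>{1..k}. Es i) \<and>
    (\<forall>i\<in>{1..k}. card (greedy (partition_indep E k Es rs) s m \<inter> Es i) = min (rs i) (card (s ` {1..m} \<inter> Es i)))"
proof (induction m)
  case 0
  then show ?case by simp
next
  case (Suc m)
  let ?P = "partition_indep E k Es rs"
  let ?U = "\<Union>i\<in>{1..k}. Es i"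
  define G where "G = greedy ?P s m"
  define T where "T = s ` {1..m}"
  define x where "x = s (Suc m)"
  define G' where "G' = (if ?P (insert x G) then insert x G else G)"
  have G'eq: "greedy ?P s (Suc m) = G'" by (simp add: G'_def G_def x_def Let_def)
  have T': "s ` {1..Suc m} = insert x T" unfolding T_def x_def by (rule img_Suc)
  have injm: "inj_on s {1..m}" using Suc.prems(1) by (rule inj_on_subset) auto
  have IH: "G \<subseteq> T \<inter> ?U" "\<forall>i\<in>{1..k}. card (G \<inter> Es i) = min (rs i) (card (T \<inter> Es i))"
  proof -
    have Em: "s ` {1..m} \<subseteq> E" using Suc.prems(2) unfolding img_Suc by blast
    show "G \<subseteq> T \<inter> ?U" "\<forall>i\<in>{1..k}. card (G \<inter> Es i) = min (rs i) (card (T \<inter> Es i))"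
      using Suc.IH[OF injm Em] by (auto simp: G_def T_def)
  qed
  have xT: "x \<notin> T"
  proof
    assume "x \<in> T"
    then obtain j where j: "j \<in> {1..m}" "s j = s (Suc m)" by (auto simp: T_def x_def)
    then have "j = Suc m" using inj_onD[OF Suc.prems(1) j(2)] by simp
    then show False using j by simp
  qed
  have xE: "x \<in> E" using Suc.prems(2) by (auto simp: x_def)
  have TE: "T \<subseteq> E" using Suc.prems(2) by (auto simp: T_def)
  have fT: "finite T" by (simp add: T_def)
  have fG: "finite G" using IH(1) fT finite_subset by blast
  have xG: "x \<notin> G" using IH(1) xT by blast
  show ?case
  proof (cases "x \<in> ?U")
    case False
    then have nP: "\<not> ?P (insert x G)" by (simp add: partition_indep_def)
    have "\<forall>i\<in>{1..k}. x \<notin> Es i" using False by blast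
    then have "\<forall>i\<in>{1..k}. insert x T \<inter> Es i = T \<inter> Es i" by blast
    then show ?thesis using IH nP G'eq T' by (auto simp: G'_def)
  next
    case True
    then obtain i0 where i0: "i0 \<in> {1..k}" "x \<in> Es i0" by blast
    have other: "x \<notin> Es i" if "i \<in> {1..k}" "i \<noteq> i0" for i
      using disj i0 that by blast
    have c0: "card (insert x G \<inter> Es i0) = Suc (card (G \<inter> Es i0))"
      using i0 xG fG by (simp add: Int_insert_left)
    have ci: "insert x G \<inter> Es i = G \<inter> Es i" if "i \<in> {1..k}" "i \<noteq> i0" for i
      using other[OF that] by blast
    have cT: "insert x T \<inter> Es i = T \<inter> Es i" if "i \<in> {1..k}" "i \<noteq> i0" for i
      using other[OF that] by blast
    have cT0: "card (insert x T \<inter> Es i0) = Suc (card (T \<inter> Es i0))"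
      using i0 xT fT by (simp add: Int_insert_left)
    have Pchar: "?P (insert x G) \<longleftrightarrow> card (T \<inter> Es i0) < rs i0"
    proof
      assume "?P (insert x G)"
      then have "\<forall>i\<in>{1..k}. card (insert x G \<inter> Es i) \<le> rs i" unfolding partition_indep_def by blast
      then have "card (insert x G \<inter> Es i0) \<le> rs i0" using i0(1) by blast
      then show "card (T \<inter> Es i0) < rs i0" using c0 IH(2) i0 by auto
    next
      assume a: "card (T \<inter> Es i0) < rs i0"
      have "insert x G \<subseteq> E" using xE IH(1) TE by blast
      moreover have "insert x G \<subseteq> ?U" using True IH(1) by blast
      moreover have "\<forall>i\<in>{1..k}. card (insert x G \<inter> Es i) \<le> rs i"
      proof
        fix i assume i: "i \<in> {1..k}"
        show "card (insert x G \<inter> Es i) \<le> rs i"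
        proof (cases "i = i0")
          case True
          then show ?thesis using c0 IH(2) i0 a by auto
        next
          case False
          then show ?thesis using ci[OF i False] IH(2) i by auto
        qed
      qed
      ultimately show "?P (insert x G)" by (simp add: partition_indep_def)
    qed
    have sub: "G' \<subseteq> insert x T \<inter> ?U" using IH(1) True by (auto simp: G'_def)
    have cnt: "card (G' \<inter> Es i) = min (rs i) (card (insert x T \<inter> Es i))" if i: "i \<in> {1..k}" for i
    proof (cases "i = i0")
      case True
      show ?thesis
      proof (cases "card (T \<inter> Es i0) < rs i0")
        case lt: True
        then have "G' = insert x G" using Pchar by (simp add: G'_def)
        then show ?thesis using True c0 cT0 IH(2) i0 lt by auto
      next
        case ge: False
        then have "G' = G" using Pchar by (simp add: G'_def)
        then show ?thesis using True cT0 IH(2) i0 ge by auto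
      qed
    next
      case False
      have "G' \<inter> Es i = G \<inter> Es i" using ci[OF i False] by (auto simp: G'_def)
      then show ?thesis using cT[OF i False] IH(2) i by simp
    qed
    show ?thesis using sub cnt G'eq T' by auto
  qed
qed





section \<open>Greedy and weights\<close>

lemma greedy_step: "greedy P s (Suc m) = greedy P s m \<or> greedy P s (Suc m) = insert (s (Suc m)) (greedy P s m)"
  by (simp add: Let_def)

lemma greedy_sub: "greedy P s m \<subseteq> s ` {1..m}"
proof (induction m)
  case 0 then show ?case by simp
next
  case (Suc m)
  then show ?case using greedy_step[of P s m] unfolding img_Suc by blast
qed

lemma greedy_later:
  assumes "inj_on s {1..j}" "1 \<le> i" "i \<le> j"
  shows "s i \<in> greedy P s j \<longleftrightarrow> s i \<in> greedy P s i"
  using assms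
proof (induction j)
  case 0 then show ?case by simp
next
  case (Suc j)
  show ?case
  proof (cases "i = Suc j")
    case True then show ?thesis by simp
  next
    case False
    then have ij: "i \<le> j" using Suc.prems by simp
    have inj: "inj_on s {1..j}" using Suc.prems(1) by (rule inj_on_subset) auto
    have "s i \<noteq> s (Suc j)"
    proof
      assume "s i = s (Suc j)"
      then have "i = Suc j" using inj_onD[OF Suc.prems(1)] ij Suc.prems(2) by simp
      then show False using ij by simp
    qed
    then have "s i \<in> greedy P s (Suc j) \<longleftrightarrow> s i \<in> greedy P s j"
      using greedy_step[of P s j] by auto
    then show ?thesis using Suc.IH[OF inj Suc.prems(2) ij] by simp
  qed
qed

lemma ind_greedy:
  assumes "inj_on s {1..n}" "1 \<le> i" "i \<le> n"
  shows "(if s i \<in> greedy P s n then 1 else 0) = real (card (greedy P s i)) - real (card (greedy P s (i - 1)))"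
proof -
  obtain i' where i': "i = Suc i'" using assms(2) by (cases i) auto
  have nin: "s i \<notin> greedy P s i'"
  proof
    assume "s i \<in> greedy P s i'"
    then have "s i \<in> s ` {1..i'}" using greedy_sub[of P s i'] by blast
    then obtain j where "j \<in> {1..i'}" "s j = s i" by auto
    moreover have "inj_on s {1..i}" using assms(1) by (rule inj_on_subset) (use assms in auto)
    ultimately have "j = i" using inj_onD[of s "{1..i}" j i] i' by simp
    then show False using \<open>j \<in> {1..i'}\<close> i' by simp
  qed
  have f: "finite (greedy P s i')" by (rule finite_subset[OF greedy_sub]) simp
  have "s i \<in> greedy P s n \<longleftrightarrow> s i \<in> greedy P s i" using greedy_later[OF assms(1-3)] by blast
  moreover have "i - 1 = i'" using i' by simp
  moreover note st = greedy_step[of P s i']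
  ultimately show ?thesis
  proof (elim disjE)
    assume a: "s i \<in> greedy P s n \<longleftrightarrow> s i \<in> greedy P s i" "i - 1 = i'" "greedy P s (Suc i') = greedy P s i'"
    then show ?thesis using nin i' by simp
  next
    assume a: "s i \<in> greedy P s n \<longleftrightarrow> s i \<in> greedy P s i" "i - 1 = i'" "greedy P s (Suc i') = insert (s (Suc i')) (greedy P s i')"
    then show ?thesis using nin i' f by simp
  qed
qed

lemma setw_greedy:
  assumes "\<sigma> permutes {1..n}" "inj_on e {1..n}"
  shows "setw n w e \<sigma> (greedy P (e \<circ> \<sigma>) n) =
    (\<Sum>i\<in>{1..n}. w i * (real (card (greedy P (e \<circ> \<sigma>) i)) - real (card (greedy P (e \<circ> \<sigma>) (i - 1)))))"
proof -
  have inj: "inj_on (e \<circ> \<sigma>) {1..n}"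
    using assms permutes_inj_on[OF assms(1)] permutes_image[OF assms(1)]
    by (intro comp_inj_on) auto
  show ?thesis unfolding setw_def
  proof (rule sum.cong[OF refl])
    fix i assume i: "i \<in> {1..n}"
    have "(if (e \<circ> \<sigma>) i \<in> greedy P (e \<circ> \<sigma>) n then 1 else 0) = real (card (greedy P (e \<circ> \<sigma>) i)) - real (card (greedy P (e \<circ> \<sigma>) (i - 1)))"
      using ind_greedy[OF inj] i by auto
    then show "(if e (\<sigma> i) \<in> greedy P (e \<circ> \<sigma>) n then w i else 0) = w i * (real (card (greedy P (e \<circ> \<sigma>) i)) - real (card (greedy P (e \<circ> \<sigma>) (i - 1))))"
      by (auto split: if_splits)
  qed
qed

lemma abel_nonneg:
  fixes w d :: "nat \<Rightarrow> real"
  assumes "\<forall>i j. 1 \<le> i \<and> i \<le> j \<and> j \<le> n \<longrightarrow> w j \<le> w i" "\<forall>i\<in>{1..n}. 0 \<le> w i"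
    "d 0 = 0" "\<forall>i\<in>{1..n}. 0 \<le> d i"
  shows "0 \<le> (\<Sum>i\<in>{1..n}. w i * (d i - d (i - 1)))"
proof -
  have "m \<le> n \<longrightarrow> (if m = 0 then 0 else w m * d m) \<le> (\<Sum>i\<in>{1..m}. w i * (d i - d (i - 1)))" for m
  proof (induction m)
    case 0 then show ?case by simp
  next
    case (Suc m)
    show ?case
    proof
      assume m: "Suc m \<le> n"
      have "(\<Sum>i\<in>{1..Suc m}. w i * (d i - d (i - 1))) = (\<Sum>i\<in>{1..m}. w i * (d i - d (i - 1))) + w (Suc m) * (d (Suc m) - d m)"
        by simp
      moreover have "(if m = 0 then 0 else w m * d m) \<le> (\<Sum>i\<in>{1..m}. w i * (d i - d (i - 1)))" using Suc m by simp
      moreover have "w (Suc m) * d m \<le> (if m = 0 then 0 else w m * d m)"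
      proof (cases "m = 0")
        case True then show ?thesis using assms(3) by simp
      next
        case False
        then have "w (Suc m) \<le> w m" "0 \<le> d m" using assms(1,4) m by auto
        then show ?thesis using False by (simp add: mult_right_mono)
      qed
      ultimately show "(if Suc m = 0 then 0 else w (Suc m) * d (Suc m)) \<le> (\<Sum>i\<in>{1..Suc m}. w i * (d i - d (i - 1)))"
        by (simp add: algebra_simps)
    qed
  qed
  from this[of n] have h: "(if n = 0 then 0 else w n * d n) \<le> (\<Sum>i\<in>{1..n}. w i * (d i - d (i - 1)))" by simp
  show ?thesis
  proof (cases "n = 0")
    case True then show ?thesis by simp
  next
    case False
    then have "0 \<le> w n * d n" using assms(2,4) by simp
    then show ?thesis using h False by simp
  qed
qed




lemma threshold:
  fixes g :: "nat \<Rightarrow> bool"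
  assumes "\<forall>i i'. 1 \<le> i \<and> i \<le> i' \<and> i' \<le> k \<and> g i' \<longrightarrow> g i"
  shows "\<exists>j\<le>k. (\<forall>i\<in>{1..j}. g i) \<and> (\<forall>i\<in>{j+1..k}. \<not> g i)"
  using assms
proof (induction k)
  case 0 then show ?case by simp
next
  case (Suc k)
  have "\<forall>i i'. 1 \<le> i \<and> i \<le> i' \<and> i' \<le> k \<and> g i' \<longrightarrow> g i"
  proof (intro allI impI)
    fix i i' assume a: "1 \<le> i \<and> i \<le> i' \<and> i' \<le> k \<and> g i'"
    show "g i" using Suc.prems[rule_format, of i i'] a by simp
  qed
  then obtain j where j: "j \<le> k" "\<forall>i\<in>{1..j}. g i" "\<forall>i\<in>{j+1..k}. \<not> g i" using Suc.IH by blast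
  show ?case
  proof (cases "j = k \<and> g (Suc k)")
    case True
    then have "\<forall>i\<in>{1..Suc k}. g i" using j(2) by (auto simp: le_Suc_eq)
    then show ?thesis by auto
  next
    case False
    have "\<not> g (Suc k)"
    proof
      assume g: "g (Suc k)"
      then have "j < k" using False j(1) by simp
      then have "g (j + 1)" using Suc.prems[rule_format, of "j + 1" "Suc k"] g \<open>j < k\<close> by simp
      then show False using j(3) \<open>j < k\<close> by auto
    qed
    then have "\<forall>i\<in>{j+1..Suc k}. \<not> g i" using j(3) by (auto simp: le_Suc_eq)
    then show ?thesis using j by (intro exI[of _ j]) auto
  qed
qed

context
  fixes E :: "'a set" and indep :: "'a set \<Rightarrow> bool" and k :: nat and F :: "nat \<Rightarrow> 'a set" and lam :: "nat \<Rightarrow> real"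
  assumes M: "matroid E indep"
    and PS: "principal_seq (E - loops E indep) indep k F lam"
begin

lemma PS0: "F 0 = {}" using PS by (simp add: principal_seq_def)
lemma PSk: "F k = E - loops E indep" using PS by (simp add: principal_seq_def)
lemma PSstep: "i < k \<Longrightarrow> F i \<subset> F (Suc i)" using PS by (simp add: principal_seq_def)
lemma PSlam: "1 \<le> i \<Longrightarrow> i < k \<Longrightarrow> lam (Suc i) < lam i" using PS by (simp add: principal_seq_def)
lemma PSmin: "i \<in> {1..k} \<Longrightarrow> F (i - 1) \<in> minimizers (E - loops E indep) indep (lam i) \<and> F i \<in> minimizers (E - loops E indep) indep (lam i)"
proof -
  assume i: "i \<in> {1..k}"
  have "\<forall>i\<in>{1..k}. F (i - 1) \<in> minimizers (E - loops E indep) indep (lam i) \<and> F i \<in> minimizers (E - loops E indep) indep (lam i) \<and>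
        (\<forall>X\<in>minimizers (E - loops E indep) indep (lam i). F (i - 1) \<subseteq> X \<and> X \<subseteq> F i)"
    using PS unfolding principal_seq_def by (elim conjE) assumption
  then show ?thesis using i by blast
qed

lemma F_mono: "i \<le> j \<Longrightarrow> j \<le> k \<Longrightarrow> F i \<subseteq> F j"
proof (induction j)
  case 0 then show ?case by simp
next
  case (Suc j)
  show ?case
  proof (cases "i = Suc j")
    case True then show ?thesis by simp
  next
    case False
    then have "F i \<subseteq> F j" using Suc by simp
    moreover have "F j \<subseteq> F (Suc j)" using PSstep[of j] Suc.prems by auto
    ultimately show ?thesis by blast
  qed
qed

lemma F_sub: "i \<le> k \<Longrightarrow> F i \<subseteq> E - loops E indep"
  using F_mono[of i k] PSk by simp

lemma Es_sub: "pm_ground F i \<subseteq> E - loops E indep" if "i \<in> {1..k}"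
  using F_sub[of i] that by (auto simp: pm_ground_def)

lemma Es_disj: "\<forall>i\<in>{1..k}. \<forall>j\<in>{1..k}. i \<noteq> j \<longrightarrow> pm_ground F i \<inter> pm_ground F j = {}"
proof (intro ballI impI)
  have aux: "pm_ground F i \<inter> pm_ground F j = {}" if "i \<in> {1..k}" "j \<in> {1..k}" "i < j" for i j
  proof -
    have "F i \<subseteq> F (j - 1)" using that by (intro F_mono) auto
    then show ?thesis by (auto simp: pm_ground_def)
  qed
  fix i j assume "i \<in> {1..k}" "j \<in> {1..k}" "i \<noteq> j"
  then show "pm_ground F i \<inter> pm_ground F j = {}"
    using aux[of i j] aux[of j i] by (cases "i < j") auto
qed

lemma cover: "j \<le> i' \<Longrightarrow> F i' - F j \<subseteq> (\<Union>i\<in>{j+1..i'}. pm_ground F i)"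
proof (induction i')
  case 0 then show ?case by simp
next
  case (Suc i')
  show ?case
  proof (cases "j = Suc i'")
    case True then show ?thesis by simp
  next
    case False
    then have "j \<le> i'" using Suc.prems by simp
    then have "F i' - F j \<subseteq> (\<Union>i\<in>{j+1..i'}. pm_ground F i)" using Suc.IH by simp
    moreover have "F (Suc i') - F j \<subseteq> pm_ground F (Suc i') \<union> (F i' - F j)" by (auto simp: pm_ground_def)
    moreover have "{j+1..i'} \<subseteq> {j+1..Suc i'}" "Suc i' \<in> {j+1..Suc i'}" using \<open>j \<le> i'\<close> by auto
    ultimately show ?thesis by blast
  qed
qed

lemma rank_eq: "i \<in> {1..k} \<Longrightarrow> pm_rank indep F i = mrank indep (F i) - mrank indep (F (i - 1))"
proof -
  assume i: "i \<in> {1..k}"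
  have "F (i - 1) \<subseteq> F i" using i by (intro F_mono) auto
  then have "pm_ground F i \<union> F (i - 1) = F i" by (auto simp: pm_ground_def)
  then show ?thesis by (simp add: pm_rank_def contr_rank_def)
qed

lemma rank_F: "j \<le> k \<Longrightarrow> real (mrank indep (F j)) = (\<Sum>i\<in>{1..j}. real (pm_rank indep F i))"
proof (induction j)
  case 0 then show ?case using PS0 rk_empty[OF M] by simp
next
  case (Suc j)
  have "mrank indep (F j) \<le> mrank indep (F (Suc j))" using F_mono[of j "Suc j"] Suc.prems rk_mono[OF M] by simp
  moreover have "pm_rank indep F (Suc j) = mrank indep (F (Suc j)) - mrank indep (F j)"
    using rank_eq[of "Suc j"] Suc.prems by simp
  ultimately show ?case using Suc by (simp add: of_nat_diff)
qed

lemma density: "i \<in> {1..k} \<Longrightarrow> real (card (pm_ground F i)) = lam i * real (pm_rank indep F i) \<and> 1 \<le> pm_rank indep F i"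
proof -
  assume i: "i \<in> {1..k}"
  let ?S = "E - loops E indep"
  have mins: "F (i - 1) \<in> minimizers ?S indep (lam i)" "F i \<in> minimizers ?S indep (lam i)" using PSmin[OF i] by auto
  have subs: "F (i - 1) \<subseteq> ?S" "F i \<subseteq> ?S" proof -
    have "i - 1 \<le> k" "i \<le> k" using i by auto
    then show "F (i - 1) \<subseteq> ?S" "F i \<subseteq> ?S" using F_sub by blast+
  qed
  have "fval indep (lam i) (F (i - 1)) \<le> fval indep (lam i) (F i)" using mins(1) subs(2) by (simp add: minimizers_def)
  moreover have "fval indep (lam i) (F i) \<le> fval indep (lam i) (F (i - 1))" using mins(2) subs(1) by (simp add: minimizers_def)
  ultimately have eq: "lam i * real (mrank indep (F (i - 1))) - real (card (F (i - 1))) = lam i * real (mrank indep (F i)) - real (card (F i))"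
    by (simp add: fval_def)
  have sub: "F (i - 1) \<subseteq> F i" using i by (intro F_mono) auto
  have fin: "finite (F i)" using subs(2) M by (auto simp: matroid_def intro: finite_subset)
  have cE: "real (card (pm_ground F i)) = real (card (F i)) - real (card (F (i - 1)))"
    using sub fin by (simp add: pm_ground_def card_Diff_subset of_nat_diff card_mono finite_subset)
  have rm: "mrank indep (F (i - 1)) \<le> mrank indep (F i)" using sub rk_mono[OF M] by simp
  have rE: "real (pm_rank indep F i) = real (mrank indep (F i)) - real (mrank indep (F (i - 1)))"
    using rank_eq[OF i] rm by (simp add: of_nat_diff)
  have dens: "real (card (pm_ground F i)) = lam i * real (pm_rank indep F i)"
  proof -
    have "lam i * real (pm_rank indep F i) = lam i * real (mrank indep (F i)) - lam i * real (mrank indep (F (i - 1)))"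
      unfolding rE by (simp add: right_diff_distrib)
    then show ?thesis using eq cE by linarith
  qed
  have "i - 1 < k" "Suc (i - 1) = i" using i by auto
  then have "F (i - 1) \<subset> F i" using PSstep[of "i - 1"] by simp
  then have "pm_ground F i \<noteq> {}" by (auto simp: pm_ground_def)
  then have "card (pm_ground F i) \<noteq> 0" using fin by (simp add: pm_ground_def)
  then have "pm_rank indep F i \<noteq> 0"
  proof (rule contrapos_nn)
    assume "pm_rank indep F i = 0"
    then show "card (pm_ground F i) = 0" using dens by simp
  qed
  then show ?thesis using dens by simp
qed

lemma lam_mono: "1 \<le> i \<Longrightarrow> i \<le> i' \<Longrightarrow> i' \<le> k \<Longrightarrow> lam i' \<le> lam i"
proof (induction i')
  case 0 then show ?case by simp
next
  case (Suc i')
  show ?case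
  proof (cases "i = Suc i'")
    case True then show ?thesis by simp
  next
    case False
    then have "lam i' \<le> lam i" using Suc by simp
    moreover have "lam (Suc i') < lam i'" using PSlam[of i'] Suc.prems False by simp
    ultimately show ?thesis by simp
  qed
qed


lemma per_m:
  fixes e :: "nat \<Rightarrow> 'a" and n m :: nat
  assumes bij: "bij_betw e {1..n} E" and m1: "1 \<le> m" and mn: "m \<le> n"
  shows "(1 - exp (-1)) * (\<Sum>\<sigma>\<in>Pi_n n. real (card (greedy indep (e \<circ> \<sigma>) m)))
    \<le> (\<Sum>\<sigma>\<in>Pi_n n. real (card (greedy (partition_indep E k (pm_ground F) (pm_rank indep F)) (e \<circ> \<sigma>) m)))"
proof -
  define Es where "Es = pm_ground F"
  define R where "R = pm_rank indep F"
  define K where "K i = card (Es i)" for i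
  define Bi where "Bi i = {j \<in> {1..n}. e j \<in> Es i}" for i
  define P where "P = real (card (Pi_n n))"
  define p where "p = real m / real n"
  define c where "c = 1 - exp (-1::real)"
  define L where "L = loops E indep"
  have injE: "inj_on e {1..n}" and eimg: "e ` {1..n} = E" using bij by (auto simp: bij_betw_def)
  have finE: "finite E" using M by (simp add: matroid_def)
  have Es_E: "Es i \<subseteq> E" if "i \<in> {1..k}" for i using Es_sub[OF that] by (auto simp: Es_def)
  have Bi_sub: "Bi i \<subseteq> {1..n}" for i by (auto simp: Bi_def)
  have Bi_img: "e ` Bi i = Es i" if "i \<in> {1..k}" for i
    using Es_E[OF that] eimg by (auto simp: Bi_def)
  have cardB: "card (Bi i) = K i" if "i \<in> {1..k}" for i
  proof -
    have "card (e ` Bi i) = card (Bi i)" by (rule card_image[OF inj_on_subset[OF injE Bi_sub]])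
    then show ?thesis using Bi_img[OF that] by (simp add: K_def)
  qed
  have p0: "0 \<le> p" and p1: "p \<le> 1" using mn by (auto simp: p_def divide_le_eq_1)
  have c0: "0 \<le> c" by (simp add: c_def)
  have Rge: "1 \<le> R i" and Kd: "real (K i) = lam i * real (R i)" if "i \<in> {1..k}" for i
    using density[OF that] by (auto simp: R_def K_def Es_def)
  have Tprops: "(e \<circ> \<sigma>) ` {1..m} \<subseteq> E \<and> inj_on (e \<circ> \<sigma>) {1..m} \<and>
      (\<forall>i\<in>{1..k}. card ((e \<circ> \<sigma>) ` {1..m} \<inter> Es i) = card (\<sigma> ` {1..m} \<inter> Bi i))" if s: "\<sigma> \<in> Pi_n n" for \<sigma>
  proof -
    have sub: "\<sigma> ` {1..m} \<subseteq> {1..n}" using perm_image_card[OF s mn] by simp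
    have injs: "inj_on \<sigma> {1..m}" using s by (simp add: Pi_n_def permutes_inj_on)
    have img: "(e \<circ> \<sigma>) ` {1..m} = e ` (\<sigma> ` {1..m})" by (simp add: image_comp)
    have "(e \<circ> \<sigma>) ` {1..m} \<subseteq> E" using sub eimg img by blast
    moreover have "inj_on (e \<circ> \<sigma>) {1..m}" using injs inj_on_subset[OF injE sub] by (rule comp_inj_on)
    moreover have "card ((e \<circ> \<sigma>) ` {1..m} \<inter> Es i) = card (\<sigma> ` {1..m} \<inter> Bi i)" if i: "i \<in> {1..k}" for i
    proof -
      have "(e \<circ> \<sigma>) ` {1..m} \<inter> Es i = e ` (\<sigma> ` {1..m} \<inter> Bi i)" using sub unfolding img by (auto simp: Bi_def)
      moreover have "inj_on e (\<sigma> ` {1..m} \<inter> Bi i)" using inj_on_subset[OF injE] sub by blast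
      ultimately show ?thesis by (simp add: card_image)
    qed
    ultimately show ?thesis by blast
  qed
  have partcard: "real (card (greedy (partition_indep E k Es R) (e \<circ> \<sigma>) m)) = (\<Sum>i\<in>{1..k}. real (min (R i) (card (\<sigma> ` {1..m} \<inter> Bi i))))"
    if s: "\<sigma> \<in> Pi_n n" for \<sigma>
  proof -
    let ?G = "greedy (partition_indep E k Es R) (e \<circ> \<sigma>) m"
    have gp: "?G \<subseteq> (e \<circ> \<sigma>) ` {1..m} \<inter> (\<Union>i\<in>{1..k}. Es i)"
      "\<forall>i\<in>{1..k}. card (?G \<inter> Es i) = min (R i) (card ((e \<circ> \<sigma>) ` {1..m} \<inter> Es i))"
      using greedy_part[OF Es_disj[unfolded Es_def[symmetric]], of "e \<circ> \<sigma>" m E R] Tprops[OF s] by auto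
    have fG: "finite ?G" using gp(1) finite_subset by blast
    have "?G = (\<Union>i\<in>{1..k}. ?G \<inter> Es i)" using gp(1) by blast
    then have "card ?G = (\<Sum>i\<in>{1..k}. card (?G \<inter> Es i))"
      using card_UN_disjoint[of "{1..k}" "\<lambda>i. ?G \<inter> Es i"] fG Es_disj[unfolded Es_def[symmetric]] by auto
    also have "\<dots> = (\<Sum>i\<in>{1..k}. min (R i) (card (\<sigma> ` {1..m} \<inter> Bi i)))"
      using gp(2) Tprops[OF s] by (intro sum.cong) auto
    finally show ?thesis by simp
  qed
  have partsum: "(\<Sum>\<sigma>\<in>Pi_n n. real (card (greedy (partition_indep E k Es R) (e \<circ> \<sigma>) m)))
      \<ge> (\<Sum>i\<in>{1..k}. P * (c * min (real (R i)) (p * real (K i))))"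
  proof -
    have "(\<Sum>\<sigma>\<in>Pi_n n. real (card (greedy (partition_indep E k Es R) (e \<circ> \<sigma>) m)))
        = (\<Sum>i\<in>{1..k}. \<Sum>\<sigma>\<in>Pi_n n. real (min (R i) (card (\<sigma> ` {1..m} \<inter> Bi i))))"
    proof -
      have "(\<Sum>\<sigma>\<in>Pi_n n. real (card (greedy (partition_indep E k Es R) (e \<circ> \<sigma>) m)))
        = (\<Sum>\<sigma>\<in>Pi_n n. \<Sum>i\<in>{1..k}. real (min (R i) (card (\<sigma> ` {1..m} \<inter> Bi i))))"
        by (rule sum.cong[OF refl]) (rule partcard)
      also have "\<dots> = (\<Sum>i\<in>{1..k}. \<Sum>\<sigma>\<in>Pi_n n. real (min (R i) (card (\<sigma> ` {1..m} \<inter> Bi i))))"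
        by (rule sum.swap)
      finally show ?thesis .
    qed
    moreover have "P * (c * min (real (R i)) (p * real (K i))) \<le> (\<Sum>\<sigma>\<in>Pi_n n. real (min (R i) (card (\<sigma> ` {1..m} \<inter> Bi i))))"
      if i: "i \<in> {1..k}" for i
    proof -
      have "c * min (real (R i)) (p * real (K i)) \<le> real (R i) * (1 - (1 - p / real (R i)) ^ K i)"
        unfolding c_def using final_bound[of "real (R i)" p "K i"] Rge[OF i] p0 p1 by simp
      then have "P * (c * min (real (R i)) (p * real (K i))) \<le> P * (real (R i) * (1 - (1 - p / real (R i)) ^ K i))"
        by (rule mult_left_mono) (simp add: P_def)
      also have "\<dots> \<le> (\<Sum>\<sigma>\<in>Pi_n n. real (min (R i) (card (\<sigma> ` {1..m} \<inter> Bi i))))"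
        using minr_bound[OF Bi_sub mn Rge[OF i], of i] cardB[OF i] by (simp add: P_def p_def mult.assoc)
      finally show ?thesis .
    qed
    ultimately show ?thesis by (metis (no_types, lifting) sum_mono)
  qed
  obtain j where j: "j \<le> k" "\<forall>i\<in>{1..j}. real (R i) \<le> p * real (K i)" "\<forall>i\<in>{j+1..k}. \<not> real (R i) \<le> p * real (K i)"
  proof -
    have down: "\<forall>i i'. 1 \<le> i \<and> i \<le> i' \<and> i' \<le> k \<and> real (R i') \<le> p * real (K i') \<longrightarrow> real (R i) \<le> p * real (K i)"
    proof (intro allI impI)
      fix i i' assume a: "1 \<le> i \<and> i \<le> i' \<and> i' \<le> k \<and> real (R i') \<le> p * real (K i')"
      have i': "i' \<in> {1..k}" and i: "i \<in> {1..k}" using a by auto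
      have "real (R i') * 1 \<le> real (R i') * (p * lam i')" using a Kd[OF i'] by (simp add: mult_ac)
      then have "1 \<le> p * lam i'" using Rge[OF i'] by simp
      also have "\<dots> \<le> p * lam i" using lam_mono[of i i'] a p0 by (simp add: mult_left_mono)
      finally have "real (R i) * 1 \<le> real (R i) * (p * lam i)" using Rge[OF i] by simp
      then show "real (R i) \<le> p * real (K i)" using Kd[OF i] by (simp add: mult_ac)
    qed
    show ?thesis using threshold[OF down] that by blast
  qed
  have rkbound: "real (card (greedy indep (e \<circ> \<sigma>) m)) \<le> real (mrank indep (F j)) + (\<Sum>i\<in>{j+1..k}. real (card (\<sigma> ` {1..m} \<inter> Bi i)))"
    if s: "\<sigma> \<in> Pi_n n" for \<sigma>
  proof -
    let ?T = "(e \<circ> \<sigma>) ` {1..m}"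
    have "card (greedy indep (e \<circ> \<sigma>) m) = mrank indep ?T" using greedy_matroid[OF M] by blast
    also have "\<dots> = mrank indep (?T - L)" using rk_loops[OF M] by (simp add: L_def)
    also have "\<dots> \<le> mrank indep (F j) + card ((?T - L) - F j)" by (rule rk_diff[OF M]) simp
    also have "card ((?T - L) - F j) \<le> card (\<Union>i\<in>{j+1..k}. ?T \<inter> Es i)"
    proof (rule card_mono)
      show "finite (\<Union>i\<in>{j+1..k}. ?T \<inter> Es i)" by simp
      have "?T - L - F j \<subseteq> F k - F j" using Tprops[OF s] PSk by (auto simp: L_def)
      also have "\<dots> \<subseteq> (\<Union>i\<in>{j+1..k}. Es i)" using cover[OF j(1)] by (simp add: Es_def)
      finally show "?T - L - F j \<subseteq> (\<Union>i\<in>{j+1..k}. ?T \<inter> Es i)" by blast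
    qed
    also have "\<dots> \<le> (\<Sum>i\<in>{j+1..k}. card (?T \<inter> Es i))" by (rule card_UN_le) simp
    also have "\<dots> = (\<Sum>i\<in>{j+1..k}. card (\<sigma> ` {1..m} \<inter> Bi i))"
      using Tprops[OF s] j(1) by (intro sum.cong) auto
    finally have "card (greedy indep (e \<circ> \<sigma>) m) \<le> mrank indep (F j) + (\<Sum>i\<in>{j+1..k}. card (\<sigma> ` {1..m} \<inter> Bi i))"
      by - (simp only: add_le_mono)
    then show ?thesis by (simp flip: of_nat_sum of_nat_add)
  qed
  have matsum: "(\<Sum>\<sigma>\<in>Pi_n n. real (card (greedy indep (e \<circ> \<sigma>) m))) \<le> P * (\<Sum>i\<in>{1..k}. min (real (R i)) (p * real (K i)))"
  proof -
    have "(\<Sum>\<sigma>\<in>Pi_n n. real (card (greedy indep (e \<circ> \<sigma>) m)))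
        \<le> (\<Sum>\<sigma>\<in>Pi_n n. real (mrank indep (F j)) + (\<Sum>i\<in>{j+1..k}. real (card (\<sigma> ` {1..m} \<inter> Bi i))))"
      using rkbound by (rule sum_mono)
    also have "\<dots> = P * real (mrank indep (F j)) + (\<Sum>i\<in>{j+1..k}. \<Sum>\<sigma>\<in>Pi_n n. real (card (\<sigma> ` {1..m} \<inter> Bi i)))"
      by (simp add: sum.distrib P_def, rule sum.swap)
    also have "\<dots> = P * (\<Sum>i\<in>{1..j}. real (R i)) + (\<Sum>i\<in>{j+1..k}. P * (p * real (K i)))"
    proof -
      have "(\<Sum>\<sigma>\<in>Pi_n n. real (card (\<sigma> ` {1..m} \<inter> Bi i))) = P * (p * real (K i))" if i: "i \<in> {j+1..k}" for i
      proof -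
        have ik: "i \<in> {1..k}" using i by auto
        show ?thesis using sumY[OF Bi_sub mn, of i] cardB[OF ik] by (simp add: P_def p_def)
      qed
      then show ?thesis using rank_F[OF j(1)] by (simp add: R_def)
    qed
    also have "\<dots> \<le> P * (\<Sum>i\<in>{1..j}. min (real (R i)) (p * real (K i))) + P * (\<Sum>i\<in>{j+1..k}. min (real (R i)) (p * real (K i)))"
    proof -
      have "(\<Sum>i\<in>{1..j}. real (R i)) = (\<Sum>i\<in>{1..j}. min (real (R i)) (p * real (K i)))"
        using j(2) by (intro sum.cong) auto
      moreover have "(\<Sum>i\<in>{j+1..k}. P * (p * real (K i))) = P * (\<Sum>i\<in>{j+1..k}. min (real (R i)) (p * real (K i)))"
      proof -
        have "(\<Sum>i\<in>{j+1..k}. min (real (R i)) (p * real (K i))) = (\<Sum>i\<in>{j+1..k}. p * real (K i))"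
        proof (rule sum.cong[OF refl])
          fix i assume "i \<in> {j+1..k}"
          then have "\<not> real (R i) \<le> p * real (K i)" using j(3) by blast
          then show "min (real (R i)) (p * real (K i)) = p * real (K i)" by simp
        qed
        then show ?thesis by (simp add: sum_distrib_left)
      qed
      ultimately show ?thesis by simp
    qed
    also have "\<dots> = P * (\<Sum>i\<in>{1..k}. min (real (R i)) (p * real (K i)))"
    proof -
      have "{1..k} = {1..j} \<union> {j+1..k}" "{1..j} \<inter> {j+1..k} = {}" using j(1) by auto
      then have "(\<Sum>i\<in>{1..k}. min (real (R i)) (p * real (K i))) = (\<Sum>i\<in>{1..j}. min (real (R i)) (p * real (K i))) + (\<Sum>i\<in>{j+1..k}. min (real (R i)) (p * real (K i)))"
        by (simp add: sum.union_disjoint)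
      then show ?thesis by (simp add: distrib_left)
    qed
    finally show ?thesis .
  qed
  have "c * (\<Sum>\<sigma>\<in>Pi_n n. real (card (greedy indep (e \<circ> \<sigma>) m))) \<le> c * (P * (\<Sum>i\<in>{1..k}. min (real (R i)) (p * real (K i))))"
    using matsum c0 by (rule mult_left_mono)
  also have "\<dots> = (\<Sum>i\<in>{1..k}. P * (c * min (real (R i)) (p * real (K i))))"
    by (simp add: sum_distrib_left mult_ac)
  also have "\<dots> \<le> (\<Sum>\<sigma>\<in>Pi_n n. real (card (greedy (partition_indep E k Es R) (e \<circ> \<sigma>) m)))" using partsum .
  finally show ?thesis by (simp add: c_def Es_def R_def)
qed

end




theorem lemma6:
  fixes E :: "'a set" and indep :: "'a set \<Rightarrow> bool" and n :: nat
    and e :: "nat \<Rightarrow> 'a" and w :: "nat \<Rightarrow> real"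
    and k :: nat and F :: "nat \<Rightarrow> 'a set" and lam :: "nat \<Rightarrow> real"
  assumes "matroid E indep"
    and "bij_betw e {1..n} E"
    and "principal_seq (E - loops E indep) (indep_del indep (loops E indep)) k F lam"
    and "\<forall>i j. 1 \<le> i \<and> i \<le> j \<and> j \<le> n \<longrightarrow> w j \<le> w i"
    and "\<forall>i\<in>{1..n}. 0 \<le> w i"
  shows "measure_pmf.expectation (pmf_of_set {\<sigma>. \<sigma> permutes {1..n}})
           (\<lambda>\<sigma>. setw n w e \<sigma>
              (greedy (partition_indep E k (pm_ground F)
                         (pm_rank (indep_del indep (loops E indep)) F)) (e \<circ> \<sigma>) n))
         \<ge> (1 - exp (-1)) *
           measure_pmf.expectation (pmf_of_set {\<sigma>. \<sigma> permutes {1..n}})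
           (\<lambda>\<sigma>. setw n w e \<sigma> (greedy indep (e \<circ> \<sigma>) n))"
proof -
  note M = assms(1)
  have idd: "indep_del indep (loops E indep) = indep" by (rule indep_del_id[OF M])
  have PS: "principal_seq (E - loops E indep) indep k F lam" using assms(3) unfolding idd .
  define PP where "PP = partition_indep E k (pm_ground F) (pm_rank indep F)"
  define c where "c = 1 - exp (-1::real)"
  have Pi: "{\<sigma>. \<sigma> permutes {1..n}} = Pi_n n" by (simp add: Pi_n_def)
  have injE: "inj_on e {1..n}" using assms(2) by (simp add: bij_betw_def)
  define cnt where "cnt X \<sigma> i = real (card (greedy X (e \<circ> \<sigma>) i))" for X \<sigma> i
  define a where "a X i = (\<Sum>\<sigma>\<in>Pi_n n. cnt X \<sigma> i)" for X i
  have sumform: "(\<Sum>\<sigma>\<in>Pi_n n. setw n w e \<sigma> (greedy X (e \<circ> \<sigma>) n)) = (\<Sum>i\<in>{1..n}. w i * (a X i - a X (i - 1)))" for X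
  proof -
    have "(\<Sum>\<sigma>\<in>Pi_n n. setw n w e \<sigma> (greedy X (e \<circ> \<sigma>) n)) = (\<Sum>\<sigma>\<in>Pi_n n. \<Sum>i\<in>{1..n}. w i * (cnt X \<sigma> i - cnt X \<sigma> (i - 1)))"
      unfolding cnt_def by (rule sum.cong[OF refl]) (rule setw_greedy, simp add: Pi_n_def, rule injE)
    also have "\<dots> = (\<Sum>i\<in>{1..n}. \<Sum>\<sigma>\<in>Pi_n n. w i * (cnt X \<sigma> i - cnt X \<sigma> (i - 1)))" by (rule sum.swap)
    also have "\<dots> = (\<Sum>i\<in>{1..n}. w i * (a X i - a X (i - 1)))"
      unfolding a_def by (simp add: sum_distrib_left[symmetric] sum_subtractf)
    finally show ?thesis .
  qed
  define d where "d i = a PP i - c * a indep i" for i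
  have d0: "d 0 = 0" by (simp add: d_def a_def cnt_def)
  have dpos: "\<forall>i\<in>{1..n}. 0 \<le> d i"
  proof
    fix i assume i: "i \<in> {1..n}"
    have "c * a indep i \<le> a PP i"
      using per_m[OF M PS assms(2), of i] i by (simp add: a_def cnt_def c_def PP_def)
    then show "0 \<le> d i" by (simp add: d_def)
  qed
  have "0 \<le> (\<Sum>i\<in>{1..n}. w i * (d i - d (i - 1)))" by (rule abel_nonneg[OF assms(4,5) d0 dpos])
  also have "\<dots> = (\<Sum>i\<in>{1..n}. w i * (a PP i - a PP (i - 1))) - c * (\<Sum>i\<in>{1..n}. w i * (a indep i - a indep (i - 1)))"
  proof -
    have "(\<Sum>i\<in>{1..n}. w i * (d i - d (i - 1))) = (\<Sum>i\<in>{1..n}. w i * (a PP i - a PP (i - 1)) - c * (w i * (a indep i - a indep (i - 1))))"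
      by (rule sum.cong[OF refl]) (simp add: d_def algebra_simps)
    also have "\<dots> = (\<Sum>i\<in>{1..n}. w i * (a PP i - a PP (i - 1))) - c * (\<Sum>i\<in>{1..n}. w i * (a indep i - a indep (i - 1)))"
      by (simp only: sum_subtractf sum_distrib_left)
    finally show ?thesis .
  qed
  finally have main: "c * (\<Sum>\<sigma>\<in>Pi_n n. setw n w e \<sigma> (greedy indep (e \<circ> \<sigma>) n)) \<le> (\<Sum>\<sigma>\<in>Pi_n n. setw n w e \<sigma> (greedy PP (e \<circ> \<sigma>) n))"
    unfolding sumform by simp
  have "0 < card (Pi_n n)" by (simp add: card_gt_0_iff Pi_n_finite Pi_n_nonempty)
  then have Ppos: "0 < real (card (Pi_n n))" by simp
  have ex: "measure_pmf.expectation (pmf_of_set (Pi_n n)) f = (\<Sum>\<sigma>\<in>Pi_n n. f \<sigma>) / real (card (Pi_n n))" for f :: "(nat \<Rightarrow> nat) \<Rightarrow> real"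
    by (rule integral_pmf_of_set[OF Pi_n_nonempty Pi_n_finite])
  show ?thesis unfolding Pi idd ex PP_def[symmetric] c_def[symmetric]
  proof -
    have "c * (\<Sum>\<sigma>\<in>Pi_n n. setw n w e \<sigma> (greedy indep (e \<circ> \<sigma>) n)) / real (card (Pi_n n))
       \<le> (\<Sum>\<sigma>\<in>Pi_n n. setw n w e \<sigma> (greedy PP (e \<circ> \<sigma>) n)) / real (card (Pi_n n))"
      using main Ppos by (rule divide_right_mono[OF _ less_imp_le])
    then show "c * ((\<Sum>\<sigma>\<in>Pi_n n. setw n w e \<sigma> (greedy indep (e \<circ> \<sigma>) n)) / real (card (Pi_n n)))
       \<le> (\<Sum>\<sigma>\<in>Pi_n n. setw n w e \<sigma> (greedy PP (e \<circ> \<sigma>) n)) / real (card (Pi_n n))" by simp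
  qed
qed


end
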